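(* Let $b\ge 2$ be an integer, $n=2^{b-2}$, and let $W^f\in\mathbb{R}^N$ be a nonzero vector whose components have pairwise distinct absolute values. Consider the problem $$\min_{s\in\mathbb{Z},\,Q\in\mathbb{R}^N}\ \|2^sQ-W^f\|_2^2\quad\text{subject to}\quad Q_i\in\{0,\pm 2^{1-n},\pm 2^{2-n},\dots,\pm 2^{-1},\pm 1\}\ \text{for all } i. \tag{P}$$ For a tuple $(k_0,\dots,k_{n-1})$ of nonnegative integers with $k_0+\dots+k_{n-1}\le N$, let $W^f_{[k_0]}$, $W^f_{[k_1]},\dots,W^f_{[k_{n-1}]}$ be as defined in the context, and set $$u(k)=\sum_{t=0}^{n-1}2^{-t}\|W^f_{[k_t]}\|_1,\qquad v(k)=\sum_{t=0}^{n-1}k_t\,2^{-2t}.$$ Define, for $u,v>0$, $$g(u,v)=v\left(2^{\lfloor \log_2 \frac{4u}{3v}\rfloor}-\frac{u}{v}\right)^2-\frac{u^2}{v}.$$ Let $(k_0^*,\dots,k_{n-1}^* )$ be a minimizer of $g(u(k),v(k))$ over all such tuples that are not identically zero. Then a minimizer $(s^*,Q^* )$ of (P) is given by $$Q^*=\sum_{t=0}^{n-1}2^{-t}\,\mathrm{sign}\big(W^f_{[k_t^*]}\big),\qquad s^*=\left\lfloor \log_2\frac{4\sum_{t=0}^{n-1}2^{-t}\|W^f_{[k^*_t]}\|_1}{3\sum_{t=0}^{n-1}k^*_t2^{-2t}}\right\rfloor,$$ and the optimal quantized vector is $2^{s^*}Q^*$.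
   Context: Notation: sort the indices of $W^f$ by decreasing $|W^f_i|$. Given nonnegative integers $k_0,\dots,k_{n-1}$ with $\sum_t k_t\le N$, the vector $W^f_{[k_0]}\in\mathbb{R}^N$ keeps the $k_0$ components of $W^f$ of largest magnitude and sets all other components to zero; $W^f_{[k_1]}$ keeps the next $k_1$ largest-magnitude components (those ranked $k_0+1,\dots,k_0+k_1$) and zeros out all others; in general $W^f_{[k_t]}$ keeps the components ranked $k_0+\dots+k_{t-1}+1,\dots,k_0+\dots+k_t$ in magnitude and zeros out the rest. $\mathrm{sign}$ is applied componentwise with $\mathrm{sign}(0)=0$. $\lfloor\cdot\rfloor$ is the floor function and $\|\cdot\|_1$ the $\ell^1$ norm. *)

theory Defs
  imports Complex_Main
begin

text \<open>Vectors in R^N are functions nat => real, only indices i < N matter.\<close>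

definition mag_rank :: "nat \<Rightarrow> (nat \<Rightarrow> real) \<Rightarrow> nat \<Rightarrow> nat" where
  "mag_rank N W i = card {j. j < N \<and> \<bar>W j\<bar> > \<bar>W i\<bar>}"

text \<open>W_[k_t]: keeps components ranked k_0+...+k_(t-1)+1, ..., k_0+...+k_t
  (1-based), i.e. 0-based ranks in [sum_{s<t} k s, sum_{s<=t} k s).\<close>
definition block :: "nat \<Rightarrow> (nat \<Rightarrow> real) \<Rightarrow> (nat \<Rightarrow> nat) \<Rightarrow> nat \<Rightarrow> nat \<Rightarrow> real" where
  "block N W k t i =
     (if i < N \<and> (\<Sum>s<t. k s) \<le> mag_rank N W i \<and> mag_rank N W i < (\<Sum>s\<le>t. k s)
      then W i else 0)"

definition l1norm :: "nat \<Rightarrow> (nat \<Rightarrow> real) \<Rightarrow> real" where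
  "l1norm N x = (\<Sum>i<N. \<bar>x i\<bar>)"

definition u_fun :: "nat \<Rightarrow> nat \<Rightarrow> (nat \<Rightarrow> real) \<Rightarrow> (nat \<Rightarrow> nat) \<Rightarrow> real" where
  "u_fun n N W k = (\<Sum>t<n. 2 powr (- real t) * l1norm N (block N W k t))"

definition v_fun :: "nat \<Rightarrow> (nat \<Rightarrow> nat) \<Rightarrow> real" where
  "v_fun n k = (\<Sum>t<n. real (k t) * 2 powr (- 2 * real t))"

definition g_fun :: "real \<Rightarrow> real \<Rightarrow> real" where
  "g_fun u v = v * (2 powr (real_of_int \<lfloor>log 2 (4 * u / (3 * v))\<rfloor>) - u / v)\<^sup>2 - u\<^sup>2 / v"

definition admissible :: "nat \<Rightarrow> nat \<Rightarrow> (nat \<Rightarrow> nat) \<Rightarrow> bool" where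
  "admissible n N k \<longleftrightarrow> (\<Sum>t<n. k t) \<le> N \<and> (\<exists>t<n. k t \<noteq> 0)"

definition quant_levels :: "nat \<Rightarrow> real set" where
  "quant_levels n = {0} \<union> {\<sigma> * 2 powr (- real j) | \<sigma> j. \<sigma> \<in> {-1, 1} \<and> j < n}"

definition feasible :: "nat \<Rightarrow> nat \<Rightarrow> (nat \<Rightarrow> real) \<Rightarrow> bool" where
  "feasible n N Q \<longleftrightarrow> (\<forall>i<N. Q i \<in> quant_levels n)"

definition objective :: "nat \<Rightarrow> (nat \<Rightarrow> real) \<Rightarrow> int \<Rightarrow> (nat \<Rightarrow> real) \<Rightarrow> real" where
  "objective N W s Q = (\<Sum>i<N. (2 powr (real_of_int s) * Q i - W i)\<^sup>2)"

end

theory Submission imports Defs begin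

definition topset :: "nat \<Rightarrow> (nat \<Rightarrow> real) \<Rightarrow> nat \<Rightarrow> nat set" where
  "topset N W m = {i. i < N \<and> mag_rank N W i < m}"

definition Tsum :: "nat \<Rightarrow> (nat \<Rightarrow> real) \<Rightarrow> nat \<Rightarrow> real" where
  "Tsum N W m = (\<Sum>i\<in>topset N W m. \<bar>W i\<bar>)"

definition distinct_abs :: "nat \<Rightarrow> (nat \<Rightarrow> real) \<Rightarrow> bool" where
  "distinct_abs N W \<longleftrightarrow> (\<forall>i<N. \<forall>j<N. i \<noteq> j \<longrightarrow> \<bar>W i\<bar> \<noteq> \<bar>W j\<bar>)"

lemma rank_lt: assumes "i < N" shows "mag_rank N W i < N"
proof -
  have "{j. j < N \<and> \<bar>W j\<bar> > \<bar>W i\<bar>} \<subseteq> {..<N} - {i}" by auto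
  hence "card {j. j < N \<and> \<bar>W j\<bar> > \<bar>W i\<bar>} \<le> card ({..<N} - {i})"
    by (intro card_mono) auto
  also have "\<dots> = N - 1" using assms by simp
  finally show ?thesis unfolding mag_rank_def using assms by linarith
qed

lemma rank_mono: assumes "i < N" "j < N" "\<bar>W i\<bar> < \<bar>W j\<bar>"
  shows "mag_rank N W j < mag_rank N W i"
proof -
  have "{l. l < N \<and> \<bar>W l\<bar> > \<bar>W j\<bar>} \<subset> {l. l < N \<and> \<bar>W l\<bar> > \<bar>W i\<bar>}"
    using assms by auto
  thus ?thesis unfolding mag_rank_def by (intro psubset_card_mono) auto
qed

lemma rank_lt_abs: assumes "distinct_abs N W" "i < N" "j < N"
  "mag_rank N W j < mag_rank N W i" shows "\<bar>W i\<bar> < \<bar>W j\<bar>"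
proof (rule ccontr)
  assume "\<not> ?thesis"
  hence "\<bar>W j\<bar> \<le> \<bar>W i\<bar>" by simp
  moreover have "i \<noteq> j" using assms(4) by auto
  ultimately have "\<bar>W j\<bar> < \<bar>W i\<bar>" using assms(1-3) unfolding distinct_abs_def by force
  thus False using rank_mono[of j N i W] assms(2-4) by simp
qed

lemma rank_inj: assumes "distinct_abs N W" shows "inj_on (mag_rank N W) {..<N}"
proof (rule inj_onI)
  fix i j assume ij: "i \<in> {..<N}" "j \<in> {..<N}" "mag_rank N W i = mag_rank N W j"
  show "i = j"
  proof (rule ccontr)
    assume "i \<noteq> j"
    hence "\<bar>W i\<bar> < \<bar>W j\<bar> \<or> \<bar>W j\<bar> < \<bar>W i\<bar>" using assms ij unfolding distinct_abs_def by force
    thus False using rank_mono[of i N j W] rank_mono[of j N i W] ij by auto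
  qed
qed

lemma rank_image: assumes "distinct_abs N W" shows "mag_rank N W ` {..<N} = {..<N}"
  using endo_inj_surj[OF _ _ rank_inj[OF assms]] rank_lt by auto

lemma card_topset: assumes "distinct_abs N W" "m \<le> N" shows "card (topset N W m) = m"
proof -
  have "card (topset N W m) = card (mag_rank N W ` topset N W m)"
    by (rule card_image[symmetric], rule inj_on_subset[OF rank_inj[OF assms(1)]])
       (auto simp: topset_def)
  also have "mag_rank N W ` topset N W m = {..<m}"
  proof
    show "mag_rank N W ` topset N W m \<subseteq> {..<m}" by (auto simp: topset_def)
    show "{..<m} \<subseteq> mag_rank N W ` topset N W m"
    proof
      fix x assume "x \<in> {..<m}"
      hence "x \<in> mag_rank N W ` {..<N}" using rank_image[OF assms(1)] assms(2) by auto
      then obtain i where "i < N" "x = mag_rank N W i" by auto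
      thus "x \<in> mag_rank N W ` topset N W m" using \<open>x \<in> {..<m}\<close> by (auto simp: topset_def)
    qed
  qed
  finally show ?thesis by simp
qed

lemma top_max: assumes "distinct_abs N W" "A \<subseteq> {..<N}"
  shows "(\<Sum>i\<in>A. \<bar>W i\<bar>) \<le> Tsum N W (card A)"
proof -
  define m where "m = card A"
  define B where "B = topset N W m"
  have finA: "finite A" using assms(2) finite_subset by blast
  have mN: "m \<le> N" unfolding m_def using card_mono[OF _ assms(2)] by simp
  have finB: "finite B" by (auto simp: B_def topset_def)
  have cB: "card B = m" using card_topset[OF assms(1) mN] B_def by simp
  have c1: "card (A - B) = card (B - A)"
  proof -
    have "card (A - B) = card A - card (A \<inter> B)" by (simp add: card_Diff_subset_Int finA)
    moreover have "card (B - A) = card B - card (B \<inter> A)" by (simp add: card_Diff_subset_Int finB)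
    ultimately show ?thesis using cB m_def by (simp add: Int_commute)
  qed
  have key: "(\<Sum>i\<in>A - B. \<bar>W i\<bar>) \<le> (\<Sum>i\<in>B - A. \<bar>W i\<bar>)"
  proof (cases "A - B = {}")
    case True
    hence "card (B - A) = 0" using c1 unfolding True by simp
    hence "B - A = {}" using finB by simp
    thus ?thesis using True by simp
  next
    case False
    define M where "M = Max ((\<lambda>i. \<bar>W i\<bar>) ` (A - B))"
    have finAB: "finite (A - B)" using finA by simp
    have "M \<in> (\<lambda>i. \<bar>W i\<bar>) ` (A - B)"
      unfolding M_def by (rule Max_in) (use False finAB in auto)
    then obtain i0 where i0: "i0 \<in> A - B" "M = \<bar>W i0\<bar>" by auto
    have "(\<Sum>i\<in>A - B. \<bar>W i\<bar>) \<le> of_nat (card (A - B)) * M"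
      by (rule sum_bounded_above) (use finAB in \<open>auto simp: M_def\<close>)
    also have "\<dots> \<le> (\<Sum>i\<in>B - A. \<bar>W i\<bar>)"
      unfolding c1
    proof (rule sum_bounded_below)
      fix j assume j: "j \<in> B - A"
      have "i0 < N" using i0 assms(2) by auto
      have "j < N" "mag_rank N W j < m" using j by (auto simp: B_def topset_def)
      moreover have "\<not> mag_rank N W i0 < m" using i0 \<open>i0 < N\<close> by (auto simp: B_def topset_def)
      ultimately show "M \<le> \<bar>W j\<bar>" using rank_lt_abs[OF assms(1) \<open>i0 < N\<close> \<open>j < N\<close>] i0 by auto
    qed
    finally show ?thesis .
  qed
  have "(\<Sum>i\<in>A. \<bar>W i\<bar>) = (\<Sum>i\<in>A - B. \<bar>W i\<bar>) + (\<Sum>i\<in>A \<inter> B. \<bar>W i\<bar>)"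
    using finA by (metis sum.Int_Diff add.commute)
  moreover have "(\<Sum>i\<in>B. \<bar>W i\<bar>) = (\<Sum>i\<in>B - A. \<bar>W i\<bar>) + (\<Sum>i\<in>A \<inter> B. \<bar>W i\<bar>)"
    using finB by (metis sum.Int_Diff add.commute inf.commute)
  ultimately show ?thesis using key unfolding Tsum_def B_def m_def by linarith
qed


definition prv :: "(nat \<Rightarrow> real) \<Rightarrow> nat \<Rightarrow> real" where
  "prv P t = (if t = 0 then 0 else P (t - 1))"

lemma abel_aux:
  fixes w P R :: "nat \<Rightarrow> real"
  assumes "\<forall>t. P t \<le> R t" "\<forall>t. w (Suc t) \<le> w t"
  shows "(\<Sum>t<Suc m. w t * (P t - prv P t)) - (\<Sum>t<Suc m. w t * (R t - prv R t)) \<le> w m * (P m - R m)"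
proof (induction m)
  case 0 then show ?case by (simp add: prv_def algebra_simps)
next
  case (Suc m)
  have "(\<Sum>t<Suc (Suc m). w t * (P t - prv P t)) - (\<Sum>t<Suc (Suc m). w t * (R t - prv R t))
     = ((\<Sum>t<Suc m. w t * (P t - prv P t)) - (\<Sum>t<Suc m. w t * (R t - prv R t)))
       + w (Suc m) * ((P (Suc m) - P m) - (R (Suc m) - R m))"
    by (simp add: prv_def algebra_simps)
  also have "\<dots> \<le> w m * (P m - R m) + w (Suc m) * ((P (Suc m) - P m) - (R (Suc m) - R m))"
    using Suc by simp
  also have "\<dots> = (w m - w (Suc m)) * (P m - R m) + w (Suc m) * (P (Suc m) - R (Suc m))"
    by (simp add: algebra_simps)
  also have "\<dots> \<le> w (Suc m) * (P (Suc m) - R (Suc m))"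
  proof -
    have "(w m - w (Suc m)) * (P m - R m) \<le> 0"
      by (rule mult_nonneg_nonpos) (use assms in auto)
    thus ?thesis by simp
  qed
  finally show ?case .
qed

lemma abel:
  fixes w P R :: "nat \<Rightarrow> real"
  assumes "\<forall>t. P t \<le> R t" "\<forall>t. w (Suc t) \<le> w t" "\<forall>t. 0 \<le> w t"
  shows "(\<Sum>t<n. w t * (P t - prv P t)) \<le> (\<Sum>t<n. w t * (R t - prv R t))"
proof (cases n)
  case 0 then show ?thesis by simp
next
  case (Suc m)
  have "w m * (P m - R m) \<le> 0" by (rule mult_nonneg_nonpos) (use assms in auto)
  thus ?thesis using abel_aux[OF assms(1,2), of m] Suc by simp
qed

lemma tsum0: "Tsum N W 0 = 0" by (simp add: Tsum_def topset_def)

lemma l1_block: "l1norm N (block N W k t) = Tsum N W (\<Sum>s\<le>t. k s) - Tsum N W (\<Sum>s<t. k s)"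
proof -
  have sub: "topset N W (\<Sum>s<t. k s) \<subseteq> topset N W (\<Sum>s\<le>t. k s)"
  proof -
    have "(\<Sum>s<t. k s) \<le> (\<Sum>s\<le>t. k s)" by (rule sum_mono2) auto
    thus ?thesis by (auto simp: topset_def)
  qed
  have "l1norm N (block N W k t) = (\<Sum>i\<in>{i\<in>{..<N}. (\<Sum>s<t. k s) \<le> mag_rank N W i \<and> mag_rank N W i < (\<Sum>s\<le>t. k s)}. \<bar>W i\<bar>)"
    unfolding l1norm_def block_def by (simp add: sum.inter_filter[symmetric] if_distrib cong: if_cong)
  also have "{i\<in>{..<N}. (\<Sum>s<t. k s) \<le> mag_rank N W i \<and> mag_rank N W i < (\<Sum>s\<le>t. k s)}
      = topset N W (\<Sum>s\<le>t. k s) - topset N W (\<Sum>s<t. k s)"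
    by (auto simp: topset_def)
  also have "(\<Sum>i\<in>topset N W (\<Sum>s\<le>t. k s) - topset N W (\<Sum>s<t. k s). \<bar>W i\<bar>)
      = Tsum N W (\<Sum>s\<le>t. k s) - Tsum N W (\<Sum>s<t. k s)"
    unfolding Tsum_def by (rule sum_diff) (use sub in \<open>auto simp: topset_def\<close>)
  finally show ?thesis .
qed

lemma u_fun_eq: "u_fun n N W k = (\<Sum>t<n. 2 powr (- real t) *
    ((\<lambda>t. Tsum N W (\<Sum>s\<le>t. k s)) t - prv (\<lambda>t. Tsum N W (\<Sum>s\<le>t. k s)) t))"
  unfolding u_fun_def l1_block
proof (rule sum.cong[OF refl])
  fix t
  have "Tsum N W (\<Sum>s<t. k s) = prv (\<lambda>t. Tsum N W (\<Sum>s\<le>t. k s)) t"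
  proof (cases t)
    case 0 thus ?thesis by (simp add: prv_def tsum0)
  next
    case (Suc m) thus ?thesis by (simp add: prv_def lessThan_Suc_atMost)
  qed
  thus "2 powr - real t * (Tsum N W (sum k {..t}) - Tsum N W (sum k {..<t})) =
         2 powr - real t * (Tsum N W (sum k {..t}) - prv (\<lambda>t. Tsum N W (sum k {..t})) t)" by simp
qed


definition Aset :: "nat \<Rightarrow> (nat \<Rightarrow> real) \<Rightarrow> nat \<Rightarrow> nat set" where
  "Aset N Q t = {i. i < N \<and> \<bar>Q i\<bar> = 2 powr (- real t)}"

lemma pow2_inj: "(2::real) powr (- real s) = 2 powr (- real t) \<longleftrightarrow> s = t"
  by (simp add: powr_inj)

lemma levels_abs: assumes "x \<in> quant_levels n"
  shows "x = 0 \<or> (\<exists>j<n. \<bar>x\<bar> = 2 powr (- real j))"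
  using assms unfolding quant_levels_def by (auto simp: abs_mult)

lemma Aset_disj: "s \<noteq> t \<Longrightarrow> Aset N Q s \<inter> Aset N Q t = {}"
  by (auto simp: Aset_def pow2_inj)

lemma Aset_fin: "finite (Aset N Q t)" by (auto simp: Aset_def)

lemma partition_sum:
  fixes F :: "nat \<Rightarrow> real"
  assumes "feasible n N Q" "\<And>i. Q i = 0 \<Longrightarrow> F i = 0"
  shows "(\<Sum>i<N. F i) = (\<Sum>t<n. \<Sum>i\<in>Aset N Q t. F i)"
proof -
  have "(\<Sum>i<N. F i) = (\<Sum>i\<in>{i. i<N \<and> Q i \<noteq> 0}. F i)"
    by (rule sum.mono_neutral_right) (use assms(2) in auto)
  also have "{i. i<N \<and> Q i \<noteq> 0} = (\<Union>t\<in>{..<n}. Aset N Q t)"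
  proof
    show "{i. i<N \<and> Q i \<noteq> 0} \<subseteq> (\<Union>t\<in>{..<n}. Aset N Q t)"
      using assms(1) levels_abs unfolding feasible_def Aset_def by fastforce
    show "(\<Union>t\<in>{..<n}. Aset N Q t) \<subseteq> {i. i<N \<and> Q i \<noteq> 0}"
      by (auto simp: Aset_def)
  qed
  also have "(\<Sum>i\<in>(\<Union>t\<in>{..<n}. Aset N Q t). F i) = (\<Sum>t<n. \<Sum>i\<in>Aset N Q t. F i)"
    by (rule sum.UNION_disjoint) (auto simp: Aset_fin Aset_disj)
  finally show ?thesis .
qed

lemma P_bound:
  assumes "distinct_abs N W"
  shows "(\<Sum>s\<le>t. \<Sum>i\<in>Aset N Q s. \<bar>W i\<bar>) \<le> Tsum N W (\<Sum>s\<le>t. card (Aset N Q s))"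
proof -
  have "(\<Sum>s\<le>t. \<Sum>i\<in>Aset N Q s. \<bar>W i\<bar>) = (\<Sum>i\<in>(\<Union>s\<in>{..t}. Aset N Q s). \<bar>W i\<bar>)"
    by (rule sum.UNION_disjoint[symmetric]) (auto simp: Aset_fin Aset_disj)
  also have "\<dots> \<le> Tsum N W (card (\<Union>s\<in>{..t}. Aset N Q s))"
    by (rule top_max[OF assms]) (auto simp: Aset_def)
  also have "card (\<Union>s\<in>{..t}. Aset N Q s) = (\<Sum>s\<le>t. card (Aset N Q s))"
    by (rule card_UN_disjoint) (auto simp: Aset_fin Aset_disj)
  finally show ?thesis .
qed

lemma Q_u_bound:
  assumes "distinct_abs N W" "feasible n N Q"
  shows "(\<Sum>i<N. \<bar>Q i\<bar> * \<bar>W i\<bar>) \<le> u_fun n N W (\<lambda>t. card (Aset N Q t))"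
proof -
  define S where "S t = (\<Sum>i\<in>Aset N Q t. \<bar>W i\<bar>)" for t
  define P where "P t = (\<Sum>s\<le>t. S s)" for t
  have PS: "P t - prv P t = S t" for t
    by (cases t) (auto simp: P_def prv_def)
  have "(\<Sum>i<N. \<bar>Q i\<bar> * \<bar>W i\<bar>) = (\<Sum>t<n. \<Sum>i\<in>Aset N Q t. \<bar>Q i\<bar> * \<bar>W i\<bar>)"
    by (rule partition_sum[OF assms(2)]) simp
  also have "\<dots> = (\<Sum>t<n. 2 powr (- real t) * S t)"
    unfolding S_def sum_distrib_left by (rule sum.cong[OF refl], rule sum.cong[OF refl]) (auto simp: Aset_def)
  also have "\<dots> = (\<Sum>t<n. 2 powr (- real t) * (P t - prv P t))" by (simp add: PS)
  also have "\<dots> \<le> u_fun n N W (\<lambda>t. card (Aset N Q t))"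
    unfolding u_fun_eq
  proof (rule abel)
    show "\<forall>t. P t \<le> Tsum N W (\<Sum>s\<le>t. card (Aset N Q s))"
      using P_bound[OF assms(1)] by (simp add: P_def S_def)
    show "\<forall>t. (2::real) powr - real (Suc t) \<le> 2 powr - real t" by simp
    show "\<forall>t. (0::real) \<le> 2 powr - real t" by simp
  qed
  finally show ?thesis .
qed

lemma Q_v_eq:
  assumes "feasible n N Q"
  shows "(\<Sum>i<N. (Q i)\<^sup>2) = v_fun n (\<lambda>t. card (Aset N Q t))"
proof -
  have "(\<Sum>i<N. (Q i)\<^sup>2) = (\<Sum>t<n. \<Sum>i\<in>Aset N Q t. (Q i)\<^sup>2)"
    by (rule partition_sum[OF assms]) simp
  also have "\<dots> = (\<Sum>t<n. \<Sum>i\<in>Aset N Q t. 2 powr (- 2 * real t))"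
  proof (rule sum.cong[OF refl], rule sum.cong[OF refl])
    fix t i assume "i \<in> Aset N Q t"
    hence "\<bar>Q i\<bar> = 2 powr (- real t)" by (simp add: Aset_def)
    hence "(Q i)\<^sup>2 = (2 powr (- real t))\<^sup>2" by (metis power2_abs)
    also have "\<dots> = 2 powr (- 2 * real t)" by (simp add: power2_eq_square powr_add[symmetric])
    finally show "(Q i)\<^sup>2 = 2 powr (- 2 * real t)" .
  qed
  also have "\<dots> = v_fun n (\<lambda>t. card (Aset N Q t))" by (simp add: v_fun_def)
  finally show ?thesis .
qed

lemma Q_card_le:
  assumes "feasible n N Q"
  shows "(\<Sum>t<n. card (Aset N Q t)) \<le> N"
proof -
  have "(\<Sum>t<n. card (Aset N Q t)) = card (\<Union>t\<in>{..<n}. Aset N Q t)"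
    by (rule card_UN_disjoint[symmetric]) (auto simp: Aset_fin Aset_disj)
  also have "\<dots> \<le> card {..<N}" by (rule card_mono) (auto simp: Aset_def)
  finally show ?thesis by simp
qed


lemma floor_pow: fixes y :: real assumes "y > 0"
  shows "2 powr real_of_int \<lfloor>log 2 y\<rfloor> \<le> y" "y < 2 * 2 powr real_of_int \<lfloor>log 2 y\<rfloor>"
proof -
  have "2 powr real_of_int \<lfloor>log 2 y\<rfloor> \<le> 2 powr (log 2 y)"
    by (rule powr_mono) auto
  thus "2 powr real_of_int \<lfloor>log 2 y\<rfloor> \<le> y" using assms by simp
  have "2 powr (log 2 y) < 2 powr (real_of_int \<lfloor>log 2 y\<rfloor> + 1)"
    by (rule powr_less_mono) linarith+
  thus "y < 2 * 2 powr real_of_int \<lfloor>log 2 y\<rfloor>" using assms by (simp add: powr_add)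
qed

lemma g_alt: fixes u v :: real assumes "v \<noteq> 0"
  shows "g_fun u v = v * (2 powr real_of_int \<lfloor>log 2 (4 * u / (3 * v))\<rfloor>)\<^sup>2
     - 2 * u * 2 powr real_of_int \<lfloor>log 2 (4 * u / (3 * v))\<rfloor>"
  unfolding g_fun_def using assms by (simp add: power2_eq_square field_simps)

lemma g_opt: fixes u v :: real and s :: int assumes "u > 0" "v > 0"
  shows "g_fun u v \<le> v * (2 powr real_of_int s)\<^sup>2 - 2 * u * 2 powr real_of_int s"
proof -
  define m where "m = \<lfloor>log 2 (4 * u / (3 * v))\<rfloor>"
  define p where "p = (2::real) powr real_of_int m"
  define r where "r = u / v"
  define x where "x = (2::real) powr real_of_int s"
  have y: "4 * u / (3 * v) > 0" using assms by simp
  have p1: "p \<le> 4 * r / 3" "4 * r / 3 < 2 * p"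
    using floor_pow[OF y] unfolding p_def m_def r_def by (auto simp: field_simps)
  have "\<bar>p - r\<bar> \<le> \<bar>x - r\<bar>"
  proof (cases "s = m")
    case True thus ?thesis by (simp add: x_def p_def)
  next
    case False
    hence "s \<ge> m + 1 \<or> s \<le> m - 1" by linarith
    thus ?thesis
    proof
      assume "s \<ge> m + 1"
      hence "x \<ge> 2 powr real_of_int (m + 1)" unfolding x_def by (intro powr_mono) auto
      hence "x \<ge> 2 * p" by (simp add: p_def powr_add)
      thus ?thesis using p1 by (auto simp: abs_if)
    next
      assume "s \<le> m - 1"
      hence "x \<le> 2 powr real_of_int (m - 1)" unfolding x_def by (intro powr_mono) auto
      hence "x \<le> p / 2" by (simp add: p_def powr_diff)
      thus ?thesis using p1 by (auto simp: abs_if)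
    qed
  qed
  hence sq: "(p - r)\<^sup>2 \<le> (x - r)\<^sup>2" by (simp add: abs_le_square_iff)
  have u: "u = v * r" using assms by (simp add: r_def)
  have "g_fun u v = v * p\<^sup>2 - 2 * u * p"
    using g_alt[of v u] assms(2) by (simp add: p_def m_def)
  also have "\<dots> = v * ((p - r)\<^sup>2 - r\<^sup>2)" by (simp add: u power2_eq_square algebra_simps)
  also have "\<dots> \<le> v * ((x - r)\<^sup>2 - r\<^sup>2)" using sq assms(2) by simp
  also have "\<dots> = v * x\<^sup>2 - 2 * u * x" by (simp add: u power2_eq_square algebra_simps)
  finally show ?thesis by (simp add: x_def)
qed

lemma g_neg: fixes u v :: real assumes "u > 0" "v > 0" shows "g_fun u v \<le> 0"
proof -
  define p where "p = (2::real) powr real_of_int \<lfloor>log 2 (4 * u / (3 * v))\<rfloor>"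
  have y: "4 * u / (3 * v) > 0" using assms by simp
  have "p \<le> 4 * u / (3 * v)" using floor_pow[OF y] by (simp add: p_def)
  hence "v * p \<le> 2 * u" using assms by (simp add: field_simps)
  moreover have "p > 0" by (simp add: p_def)
  ultimately have "v * p * p \<le> 2 * u * p" by (simp add: mult_right_mono)
  thus ?thesis unfolding g_alt[OF order.strict_implies_not_eq[OF assms(2), symmetric]] p_def[symmetric]
    by (simp add: power2_eq_square algebra_simps)
qed

lemma sq_sum_disj: fixes f :: "nat \<Rightarrow> real"
  assumes "\<forall>s t. s \<noteq> t \<longrightarrow> f s * f t = 0"
  shows "(\<Sum>t<n. f t)\<^sup>2 = (\<Sum>t<n. (f t)\<^sup>2)"
proof (induction n)
  case 0 then show ?case by simp
next
  case (Suc n)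
  have "(\<Sum>t<n. f t) * f n = 0"
    unfolding sum_distrib_right using assms by (intro sum.neutral) auto
  thus ?case using Suc by (simp add: power2_eq_square algebra_simps)
qed

definition bset :: "nat \<Rightarrow> (nat \<Rightarrow> real) \<Rightarrow> (nat \<Rightarrow> nat) \<Rightarrow> nat \<Rightarrow> nat set" where
  "bset N W k t = {i. i < N \<and> (\<Sum>s<t. k s) \<le> mag_rank N W i \<and> mag_rank N W i < (\<Sum>s\<le>t. k s)}"

lemma block_bset: "block N W k t i = (if i \<in> bset N W k t then W i else 0)"
  by (simp add: block_def bset_def)

lemma bset_disj: assumes "s \<noteq> t" shows "bset N W k s \<inter> bset N W k t = {}"
proof -
  have "(\<Sum>x\<le>a. k x) \<le> (\<Sum>x<b. k x)" if "a < b" for a b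
    by (rule sum_mono2) (use that in auto)
  thus ?thesis using assms unfolding bset_def
    by (auto, metis linorder_neqE_nat not_le order.strict_trans2)
qed

lemma card_bset: assumes "distinct_abs N W" "(\<Sum>s\<le>t. k s) \<le> N"
  shows "card (bset N W k t) = k t"
proof -
  have le: "(\<Sum>s<t. k s) \<le> (\<Sum>s\<le>t. k s)" by (rule sum_mono2) auto
  have "bset N W k t = topset N W (\<Sum>s\<le>t. k s) - topset N W (\<Sum>s<t. k s)"
    by (auto simp: bset_def topset_def)
  moreover have "topset N W (\<Sum>s<t. k s) \<subseteq> topset N W (\<Sum>s\<le>t. k s)"
    using le by (auto simp: topset_def)
  ultimately have "card (bset N W k t) = (\<Sum>s\<le>t. k s) - (\<Sum>s<t. k s)"
    using card_topset[OF assms(1)] assms(2) le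
    by (simp add: card_Diff_subset topset_def)
  also have "\<dots> = k t" by (simp add: lessThan_Suc_atMost[symmetric])
  finally show ?thesis .
qed


lemma v_pos: assumes "t0 < n" "k t0 \<noteq> 0" shows "v_fun n k > 0"
  unfolding v_fun_def by (rule sum_pos2[where i=t0]) (use assms in auto)

lemma u_nonneg: "u_fun n N W k \<ge> 0"
  unfolding u_fun_def l1norm_def by (intro sum_nonneg mult_nonneg_nonneg) auto

lemma u_zero: assumes "\<forall>t<n. k t = 0" shows "u_fun n N W k = 0"
proof -
  have "bset N W k t = {}" if "t < n" for t
    using assms that by (auto simp: bset_def)
  hence "l1norm N (block N W k t) = 0" if "t < n" for t
    using that by (simp add: l1norm_def block_bset)
  thus ?thesis unfolding u_fun_def by simp
qed

lemma expand_obj: fixes x :: real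
  shows "(\<Sum>i<N. (x * q i - w i)\<^sup>2) = x\<^sup>2 * (\<Sum>i<N. (q i)\<^sup>2) - 2 * x * (\<Sum>i<N. q i * w i) + (\<Sum>i<N. (w i)\<^sup>2)"
proof -
  have "(\<Sum>i<N. (x * q i - w i)\<^sup>2) = (\<Sum>i<N. x\<^sup>2 * (q i)\<^sup>2 - 2 * x * (q i * w i) + (w i)\<^sup>2)"
    by (rule sum.cong) (auto simp: power2_eq_square algebra_simps)
  thus ?thesis by (simp add: sum.distrib sum_subtractf sum_distrib_left)
qed

lemma Qs_sq:
  "(\<Sum>t<n. 2 powr (- real t) * sgn (block N W k t i))\<^sup>2
     \<le> (\<Sum>t<n. 2 powr (- 2 * real t) * (if i \<in> bset N W k t then 1 else 0))"
proof -
  have "(\<Sum>t<n. 2 powr (- real t) * sgn (block N W k t i))\<^sup>2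
      = (\<Sum>t<n. (2 powr (- real t) * sgn (block N W k t i))\<^sup>2)"
  proof (rule sq_sum_disj, intro allI impI)
    fix s t :: nat assume "s \<noteq> t"
    hence "i \<notin> bset N W k s \<or> i \<notin> bset N W k t" using bset_disj[of s t N W k] by blast
    thus "2 powr - real s * sgn (block N W k s i) * (2 powr - real t * sgn (block N W k t i)) = 0"
      by (auto simp: block_bset)
  qed
  also have "\<dots> \<le> (\<Sum>t<n. 2 powr (- 2 * real t) * (if i \<in> bset N W k t then 1 else 0))"
  proof (rule sum_mono)
    fix t
    have e: "(2 powr (- real t))\<^sup>2 = (2::real) powr (- 2 * real t)"
      by (simp add: power2_eq_square powr_add[symmetric])
    have "(sgn (block N W k t i))\<^sup>2 \<le> (if i \<in> bset N W k t then 1 else 0)"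
      by (auto simp: block_bset sgn_if)
    hence "(2 powr (- real t))\<^sup>2 * (sgn (block N W k t i))\<^sup>2
        \<le> (2 powr (- real t))\<^sup>2 * (if i \<in> bset N W k t then 1 else 0)"
      by (intro mult_left_mono) auto
    thus "(2 powr - real t * sgn (block N W k t i))\<^sup>2
         \<le> 2 powr (- 2 * real t) * (if i \<in> bset N W k t then 1 else 0)"
      by (simp add: power_mult_distrib e)
  qed
  finally show ?thesis .
qed

lemma Qs_sq_sum:
  assumes "distinct_abs N W" "\<forall>t<n. (\<Sum>s\<le>t. k s) \<le> N"
  shows "(\<Sum>i<N. (\<Sum>t<n. 2 powr (- real t) * sgn (block N W k t i))\<^sup>2) \<le> v_fun n k"
proof -
  have "(\<Sum>i<N. (\<Sum>t<n. 2 powr (- real t) * sgn (block N W k t i))\<^sup>2)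
     \<le> (\<Sum>i<N. \<Sum>t<n. 2 powr (- 2 * real t) * (if i \<in> bset N W k t then 1 else 0))"
    by (rule sum_mono) (rule Qs_sq)
  also have "\<dots> = (\<Sum>t<n. 2 powr (- 2 * real t) * (\<Sum>i<N. (if i \<in> bset N W k t then 1 else 0)))"
    by (subst sum.swap) (simp add: sum_distrib_left)
  also have "\<dots> = (\<Sum>t<n. 2 powr (- 2 * real t) * real (k t))"
  proof (rule sum.cong[OF refl])
    fix t assume t: "t \<in> {..<n}"
    have "(\<Sum>i<N. (if i \<in> bset N W k t then 1 else 0::real)) = real (card ({..<N} \<inter> bset N W k t))"
      by (simp add: sum.If_cases)
    also have "{..<N} \<inter> bset N W k t = bset N W k t" by (auto simp: bset_def)
    also have "card (bset N W k t) = k t" using card_bset[OF assms(1)] assms(2) t by simp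
    finally show "2 powr (- 2 * real t) * (\<Sum>i<N. (if i \<in> bset N W k t then 1 else 0)) =
         2 powr (- 2 * real t) * real (k t)" by simp
  qed
  also have "\<dots> = v_fun n k" by (simp add: v_fun_def mult.commute)
  finally show ?thesis .
qed

lemma Qs_W_sum:
  "(\<Sum>i<N. (\<Sum>t<n. 2 powr (- real t) * sgn (block N W k t i)) * W i) = u_fun n N W k"
proof -
  have "(\<Sum>i<N. (\<Sum>t<n. 2 powr (- real t) * sgn (block N W k t i)) * W i)
      = (\<Sum>i<N. \<Sum>t<n. 2 powr (- real t) * \<bar>block N W k t i\<bar>)"
  proof (rule sum.cong[OF refl])
    fix i
    have "sgn (block N W k t i) * W i = \<bar>block N W k t i\<bar>" for t
      by (auto simp: block_bset abs_sgn)
    thus "(\<Sum>t<n. 2 powr (- real t) * sgn (block N W k t i)) * W i = (\<Sum>t<n. 2 powr (- real t) * \<bar>block N W k t i\<bar>)"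
      by (simp add: sum_distrib_right mult.assoc)
  qed
  also have "\<dots> = u_fun n N W k"
    by (subst sum.swap) (simp add: u_fun_def l1norm_def sum_distrib_left)
  finally show ?thesis .
qed

lemma Qs_feasible:
  assumes "i < N"
  shows "(\<Sum>t<n. 2 powr (- real t) * sgn (block N W k t i)) \<in> quant_levels n"
proof (cases "\<exists>t<n. i \<in> bset N W k t")
  case True
  then obtain t where t: "t < n" "i \<in> bset N W k t" by auto
  have "(\<Sum>t'<n. 2 powr (- real t') * sgn (block N W k t' i))
      = 2 powr (- real t) * sgn (block N W k t i) + (\<Sum>t'\<in>{..<n} - {t}. 2 powr (- real t') * sgn (block N W k t' i))"
    by (rule sum.remove) (use t in auto)
  also have "(\<Sum>t'\<in>{..<n} - {t}. 2 powr (- real t') * sgn (block N W k t' i)) = 0"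
  proof (rule sum.neutral, rule ballI)
    fix t' assume "t' \<in> {..<n} - {t}"
    hence "i \<notin> bset N W k t'" using bset_disj[of t' t N W k] t by auto
    thus "2 powr (- real t') * sgn (block N W k t' i) = 0" by (simp add: block_bset)
  qed
  finally have e: "(\<Sum>t'<n. 2 powr (- real t') * sgn (block N W k t' i)) = sgn (W i) * 2 powr (- real t)"
    using t by (simp add: block_bset)
  show ?thesis
  proof (cases "W i = 0")
    case True thus ?thesis unfolding e by (simp add: quant_levels_def)
  next
    case False
    hence "sgn (W i) \<in> {-1, 1}" by (auto simp: sgn_if)
    thus ?thesis unfolding e quant_levels_def using t(1) by blast
  qed
next
  case False
  hence "(\<Sum>t'<n. 2 powr (- real t') * sgn (block N W k t' i)) = 0"
    by (intro sum.neutral) (auto simp: block_bset)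
  thus ?thesis by (simp add: quant_levels_def)
qed

lemma lower_obj: fixes x :: real assumes "x > 0" "distinct_abs N W" "feasible n N Q"
  shows "(\<Sum>i<N. (x * Q i - W i)\<^sup>2) \<ge>
    x\<^sup>2 * v_fun n (\<lambda>t. card (Aset N Q t)) - 2 * x * u_fun n N W (\<lambda>t. card (Aset N Q t)) + (\<Sum>i<N. (W i)\<^sup>2)"
proof -
  have "(\<Sum>i<N. (x * Q i - W i)\<^sup>2) \<ge> (\<Sum>i<N. (x * \<bar>Q i\<bar> - \<bar>W i\<bar>)\<^sup>2)"
  proof (rule sum_mono)
    fix i
    have "Q i * W i \<le> \<bar>Q i\<bar> * \<bar>W i\<bar>" by (metis abs_ge_self abs_mult)
    hence "x * (Q i * W i) \<le> x * (\<bar>Q i\<bar> * \<bar>W i\<bar>)" using assms(1) by simp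
    thus "(x * \<bar>Q i\<bar> - \<bar>W i\<bar>)\<^sup>2 \<le> (x * Q i - W i)\<^sup>2"
      by (simp add: power2_eq_square algebra_simps)
  qed
  also have "(\<Sum>i<N. (x * \<bar>Q i\<bar> - \<bar>W i\<bar>)\<^sup>2)
      = x\<^sup>2 * (\<Sum>i<N. (Q i)\<^sup>2) - 2 * x * (\<Sum>i<N. \<bar>Q i\<bar> * \<bar>W i\<bar>) + (\<Sum>i<N. (W i)\<^sup>2)"
    by (subst expand_obj) simp
  finally have "(\<Sum>i<N. (x * Q i - W i)\<^sup>2) \<ge> \<dots>" .
  moreover have "2 * x * (\<Sum>i<N. \<bar>Q i\<bar> * \<bar>W i\<bar>) \<le> 2 * x * u_fun n N W (\<lambda>t. card (Aset N Q t))"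
    using Q_u_bound[OF assms(2,3)] assms(1) by simp
  ultimately show ?thesis by (simp only: Q_v_eq[OF assms(3)])
qed


theorem theorem1:
  fixes b n N :: nat and W :: "nat \<Rightarrow> real" and kstar :: "nat \<Rightarrow> nat"
  assumes "b \<ge> 2"
    and "n = 2 ^ (b - 2)"
    and "\<exists>i<N. W i \<noteq> 0"
    and "\<forall>i<N. \<forall>j<N. i \<noteq> j \<longrightarrow> \<bar>W i\<bar> \<noteq> \<bar>W j\<bar>"
    and "admissible n N kstar"
    and "\<forall>k. admissible n N k \<longrightarrow>
           g_fun (u_fun n N W kstar) (v_fun n kstar) \<le> g_fun (u_fun n N W k) (v_fun n k)"
  shows "let Qs = (\<lambda>i. \<Sum>t<n. 2 powr (- real t) * sgn (block N W kstar t i));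
             ss = \<lfloor>log 2 (4 * (\<Sum>t<n. 2 powr (- real t) * l1norm N (block N W kstar t))
                           / (3 * (\<Sum>t<n. real (kstar t) * 2 powr (- 2 * real t))))\<rfloor>
         in feasible n N Qs \<and>
            (\<forall>s Q. feasible n N Q \<longrightarrow> objective N W ss Qs \<le> objective N W s Q)"
proof -
  define Qs where "Qs = (\<lambda>i. \<Sum>t<n. 2 powr (- real t) * sgn (block N W kstar t i))"
  define u where "u = u_fun n N W kstar"
  define v where "v = v_fun n kstar"
  define ss where "ss = \<lfloor>log 2 (4 * u / (3 * v))\<rfloor>"
  define WW where "WW = (\<Sum>i<N. (W i)\<^sup>2)"
  define gs where "gs = g_fun u v"
  have dist: "distinct_abs N W" using assms(4) by (simp add: distinct_abs_def)
  have n1: "n \<ge> 1" using assms(2) by simp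
  obtain i0 where i0: "i0 < N" "W i0 \<noteq> 0" using assms(3) by auto
  have sumk: "(\<Sum>t<n. kstar t) \<le> N" and nz: "\<exists>t<n. kstar t \<noteq> 0"
    using assms(5) by (auto simp: admissible_def)
  have Kle: "\<forall>t<n. (\<Sum>s\<le>t. kstar s) \<le> N"
  proof (intro allI impI)
    fix t assume "t < n"
    hence "(\<Sum>s\<le>t. kstar s) \<le> (\<Sum>s<n. kstar s)" by (intro sum_mono2) auto
    thus "(\<Sum>s\<le>t. kstar s) \<le> N" using sumk by simp
  qed
  have vpos: "v > 0" using nz v_pos unfolding v_def by blast
  have gs0: "gs \<le> 0"
  proof -
    define k1 where "k1 = (\<lambda>t::nat. if t = 0 then 1 else (0::nat))"
    have s1: "(\<Sum>t<n. k1 t) = 1" using n1 unfolding k1_def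
      by (simp add: sum.If_cases lessThan_def)
    have adm: "admissible n N k1" unfolding admissible_def using s1 i0 n1
      by (auto simp: k1_def intro!: exI[of _ 0])
    have "v_fun n k1 > 0" by (rule v_pos[of 0]) (use n1 in \<open>auto simp: k1_def\<close>)
    moreover have "u_fun n N W k1 > 0"
    proof -
      have "\<bar>W i0\<bar> \<le> Tsum N W (card {i0})" using top_max[OF dist, of "{i0}"] i0 by simp
      also have "\<dots> = l1norm N (block N W k1 0)" by (simp add: l1_block k1_def tsum0)
      also have "\<dots> = 2 powr (- real 0) * l1norm N (block N W k1 0)" by simp
      also have "\<dots> \<le> u_fun n N W k1" unfolding u_fun_def
        by (rule member_le_sum) (use n1 in \<open>auto simp: l1norm_def intro!: sum_nonneg\<close>)
      finally show ?thesis using i0 by simp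
    qed
    ultimately have "g_fun (u_fun n N W k1) (v_fun n k1) \<le> 0" by (intro g_neg)
    thus ?thesis using assms(6) adm unfolding gs_def u_def v_def by force
  qed
  have up: "objective N W ss Qs \<le> WW + gs"
  proof -
    define x where "x = (2::real) powr real_of_int ss"
    have "objective N W ss Qs = x\<^sup>2 * (\<Sum>i<N. (Qs i)\<^sup>2) - 2 * x * (\<Sum>i<N. Qs i * W i) + WW"
      unfolding objective_def x_def WW_def by (rule expand_obj)
    also have "(\<Sum>i<N. Qs i * W i) = u" unfolding Qs_def u_def by (rule Qs_W_sum)
    also have "x\<^sup>2 * (\<Sum>i<N. (Qs i)\<^sup>2) \<le> x\<^sup>2 * v"
      unfolding Qs_def v_def by (intro mult_left_mono Qs_sq_sum[OF dist Kle]) auto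
    hence "x\<^sup>2 * (\<Sum>i<N. (Qs i)\<^sup>2) - 2 * x * u + WW \<le> x\<^sup>2 * v - 2 * x * u + WW" by simp
    also have "x\<^sup>2 * v - 2 * x * u = gs"
      unfolding gs_def g_alt[OF order.strict_implies_not_eq[OF vpos, symmetric]] x_def ss_def
      by (simp add: algebra_simps)
    finally show ?thesis by simp
  qed
  have low: "WW + gs \<le> objective N W s Q" if fQ: "feasible n N Q" for s Q
  proof -
    define x where "x = (2::real) powr real_of_int s"
    define kq where "kq = (\<lambda>t. card (Aset N Q t))"
    have xpos: "x > 0" by (simp add: x_def)
    have lo: "objective N W s Q \<ge> x\<^sup>2 * v_fun n kq - 2 * x * u_fun n N W kq + WW"
      unfolding objective_def x_def[symmetric] WW_def kq_def by (rule lower_obj[OF xpos dist fQ])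
    have vq: "v_fun n kq \<ge> 0" unfolding v_fun_def by (intro sum_nonneg) auto
    show ?thesis
    proof (cases "u_fun n N W kq > 0")
      case False
      hence "u_fun n N W kq = 0" using u_nonneg[of n N W kq] by linarith
      moreover have "x\<^sup>2 * v_fun n kq \<ge> 0" using vq by simp
      ultimately show ?thesis using lo gs0 by simp
    next
      case True
      have nzq: "\<exists>t<n. kq t \<noteq> 0" using True u_zero[of n kq N W] by force
      have adm: "admissible n N kq" unfolding admissible_def kq_def
        using Q_card_le[OF fQ] nzq kq_def by auto
      have vqp: "v_fun n kq > 0" using nzq v_pos by blast
      have "gs \<le> g_fun (u_fun n N W kq) (v_fun n kq)"
        using assms(6) adm unfolding gs_def u_def v_def by blast
      also have "\<dots> \<le> v_fun n kq * x\<^sup>2 - 2 * u_fun n N W kq * x"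
        unfolding x_def by (rule g_opt[OF True vqp])
      finally show ?thesis using lo by (simp add: algebra_simps)
    qed
  qed
  have feas: "feasible n N Qs" unfolding feasible_def Qs_def using Qs_feasible by blast
  have ss_eq: "ss = \<lfloor>log 2 (4 * (\<Sum>t<n. 2 powr (- real t) * l1norm N (block N W kstar t))
                           / (3 * (\<Sum>t<n. real (kstar t) * 2 powr (- 2 * real t))))\<rfloor>"
    unfolding ss_def u_def v_def u_fun_def v_fun_def ..
  show ?thesis
    unfolding Let_def Qs_def[symmetric] ss_eq[symmetric]
    using feas up low by (meson order.trans)
qed

end
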